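(* Let $A$ be any real $m\times n$ matrix with columns $A_1,\dots,A_n$, let $1\le k<n$, and let $\mathbf{S}$ be a random subset of $\{1,\dots,n\}$ distributed uniformly over all subsets of size $k$. Define $r_{\mathbf{S}}=\mathrm{rank}(A_{\mathbf{S}})$ and $t_{\mathbf{S}}=|\{i\notin\mathbf{S}: A_i\in\mathcal{R}(A_{\mathbf{S}})\}|$. Then $$\mathbb{E}[t_{\mathbf{S}}]\ge\Big(\frac nk-1\Big)\big(k-\mathbb{E}[r_{\mathbf{S}}]\big).$$
   Context: $A_{\mathbf{S}}$ denotes the submatrix of $A$ formed by the columns indexed by $\mathbf{S}$, and $\mathcal{R}(M)$ denotes the column (range) space of a matrix $M$. *)

theory Defs
  imports "HOL-Analysis.Analysis" "HOL-Probability.Probability"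
begin

definition colspace_sub :: "real^'n^'m \<Rightarrow> 'n set \<Rightarrow> (real^'m) set" where
  "colspace_sub A S = span ((\<lambda>i. column i A) ` S)"

definition r_S :: "real^'n^'m \<Rightarrow> 'n set \<Rightarrow> nat" where
  "r_S A S = dim (colspace_sub A S)"

definition t_S :: "real^'n^'m \<Rightarrow> 'n set \<Rightarrow> nat" where
  "t_S A S = card {i. i \<notin> S \<and> column i A \<in> colspace_sub A S}"

definition unif_ksubsets :: "nat \<Rightarrow> ('n::finite) set pmf" where
  "unif_ksubsets k = pmf_of_set {S. card S = k}"

end

theory Submission
  imports Defs
begin

lemma step1:
  fixes c :: "'n::finite \<Rightarrow> real^'m" and S :: "'n set"
  shows "card S \<le> dim (span (c ` S)) + card {j\<in>S. c j \<in> span (c ` (S - {j}))}"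
proof -
  define N where "N = S - {j\<in>S. c j \<in> span (c ` (S - {j}))}"
  have notin: "c j \<notin> span (c ` (N - {j}))" if "j \<in> N" for j
  proof
    assume "c j \<in> span (c ` (N - {j}))"
    moreover have "span (c ` (N - {j})) \<subseteq> span (c ` (S - {j}))"
      by (rule span_mono) (auto simp: N_def)
    ultimately show False using that by (auto simp: N_def)
  qed
  have inj: "inj_on c N"
  proof (rule inj_onI, rule ccontr)
    fix x y assume "x \<in> N" "y \<in> N" "c x = c y" "x \<noteq> y"
    then have "c x \<in> c ` (N - {x})" by auto
    then have "c x \<in> span (c ` (N - {x}))" by (rule span_base)
    with notin \<open>x \<in> N\<close> show False by blast
  qed
  have ind: "independent (c ` N)"
    unfolding dependent_def
  proof clarsimp
    fix j assume j: "j \<in> N" and sp: "c j \<in> span (c ` N - {c j})"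
    have "c ` N - {c j} \<subseteq> c ` (N - {j})" by auto
    then have "span (c ` N - {c j}) \<subseteq> span (c ` (N - {j}))" by (rule span_mono)
    with sp notin j show False by blast
  qed
  have "c ` N \<subseteq> span (c ` S)" by (auto simp: N_def intro: span_base)
  then have "card (c ` N) \<le> dim (span (c ` S))"
    using ind by (rule independent_card_le_dim)
  then have "card N \<le> dim (span (c ` S))" using card_image[OF inj] by simp
  moreover have "card S \<le> card N + card {j\<in>S. c j \<in> span (c ` (S - {j}))}"
    unfolding N_def
    using card_Diff_subset[of "{j\<in>S. c j \<in> span (c ` (S - {j}))}" S]
      card_mono[of S "{j\<in>S. c j \<in> span (c ` (S - {j}))}"] by auto
  ultimately show ?thesis by linarith
qed

lemma card_compl_fin: "card (- (S::'n::finite set)) = CARD('n) - card S"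
  by (metis Compl_eq_Diff_UNIV card_Diff_subset finite subset_UNIV)

lemma step2:
  fixes c :: "'n::finite \<Rightarrow> real^'m" and k :: nat
  defines "K \<equiv> {S::'n set. card S = k}"
  defines "R \<equiv> \<lambda>S. {j\<in>S. c j \<in> span (c ` (S - {j}))}"
  defines "T \<equiv> \<lambda>S. {i. i\<notin>S \<and> c i \<in> span (c ` S)}"
  shows "(\<Sum>S\<in>K. card (R S)) * (CARD('n) - k) \<le> (\<Sum>S\<in>K. card (T S)) * k"
proof -
  define Y where "Y = (SIGMA S:K. SIGMA i:R S. - S)"
  define X where "X = (SIGMA S:K. SIGMA i:T S. S)"
  define g where "g = (\<lambda>(S::'n set, (i::'n, l::'n)). (insert l (S - {i}), (i, l)))"
  have cY: "card Y = (\<Sum>S\<in>K. card (R S)) * (CARD('n) - k)"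
    unfolding Y_def
    by (simp add: card_SigmaI sum_distrib_right K_def card_compl_fin)
  have cX: "card X = (\<Sum>S\<in>K. card (T S)) * k"
    unfolding X_def
    by (simp add: card_SigmaI sum_distrib_right K_def)
  have inj: "inj_on g Y"
  proof (rule inj_onI)
    fix a b assume "a \<in> Y" "b \<in> Y" "g a = g b"
    then obtain S i l S' where a: "a = (S,(i,l))" "i \<in> S" "l \<notin> S"
      and b: "b = (S',(i,l))" "i \<in> S'" "l \<notin> S'"
      and e: "insert l (S - {i}) = insert l (S' - {i})"
      by (auto simp: Y_def g_def R_def)
    have "S = S'"
    proof -
      have "S = insert i (insert l (S - {i}) - {l})" using a by auto
      also have "\<dots> = insert i (insert l (S' - {i}) - {l})" using e by simp
      also have "\<dots> = S'" using b by auto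
      finally show ?thesis .
    qed
    then show "a = b" using a b by simp
  qed
  have sub: "g ` Y \<subseteq> X"
  proof
    fix x assume "x \<in> g ` Y"
    then obtain S i l where S: "S \<in> K" "i \<in> S" "l \<notin> S"
      and ci: "c i \<in> span (c ` (S - {i}))" and x: "x = (insert l (S - {i}), (i, l))"
      by (auto simp: Y_def g_def R_def)
    have li: "l \<noteq> i" using S by auto
    have "card (insert l (S - {i})) = k"
      using S card_gt_0_iff[of S] by (auto simp: K_def card_insert_if)
    moreover have "insert l (S - {i}) - {l} = S - {i}" using S by auto
    moreover have "span (c ` (S - {i})) \<subseteq> span (c ` insert l (S - {i}))"
      by (rule span_mono) auto
    ultimately show "x \<in> X" using ci li x
      by (auto simp: X_def K_def T_def)
  qed
  have "card Y \<le> card X"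
    using card_inj_on_le[OF inj sub] by simp
  with cX cY show ?thesis by simp
qed

theorem lemma3:
  fixes A :: "real^'n^'m" and k :: nat
  assumes "1 \<le> k" and "k < CARD('n)"
  shows "measure_pmf.expectation (unif_ksubsets k) (\<lambda>S. real (t_S A S))
         \<ge> (real CARD('n) / real k - 1) *
           (real k - measure_pmf.expectation (unif_ksubsets k) (\<lambda>S. real (r_S A S)))"
proof -
  define c where "c = (\<lambda>i. column i A)"
  define K where "K = {S::'n set. card S = k}"
  define R where "R = (\<lambda>S. {j\<in>S. c j \<in> span (c ` (S - {j}))})"
  define T where "T = (\<lambda>S. {i. i\<notin>S \<and> c i \<in> span (c ` S)})"
  have finK: "finite K" by simp
  obtain B :: "'n set" where "card B = k"
    using obtain_subset_with_card_n[of k "UNIV :: 'n set"] assms by auto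
  then have neK: "K \<noteq> {}" by (auto simp: K_def)
  have tS: "t_S A S = card (T S)" for S by (simp add: t_S_def T_def colspace_sub_def c_def)
  have rS: "r_S A S = dim (span (c ` S))" for S by (simp add: r_S_def colspace_sub_def c_def)
  define N where "N = real (card K)"
  define ST where "ST = (\<Sum>S\<in>K. real (card (T S)))"
  define SR where "SR = (\<Sum>S\<in>K. real (card (R S)))"
  define Sr where "Sr = (\<Sum>S\<in>K. real (dim (span (c ` S))))"
  have Npos: "N > 0" using neK finK by (simp add: N_def card_gt_0_iff)
  have E1: "measure_pmf.expectation (unif_ksubsets k) (\<lambda>S. real (t_S A S)) = ST / N"
    unfolding unif_ksubsets_def K_def[symmetric]
    by (simp add: integral_pmf_of_set[OF neK finK] tS ST_def N_def)
  have E2: "measure_pmf.expectation (unif_ksubsets k) (\<lambda>S. real (r_S A S)) = Sr / N"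
    unfolding unif_ksubsets_def K_def[symmetric]
    by (simp add: integral_pmf_of_set[OF neK finK] rS Sr_def N_def)
  have h1: "real k * N \<le> Sr + SR"
  proof -
    have "real k * N = (\<Sum>S\<in>K. real (card S))" by (simp add: K_def N_def)
    also have "\<dots> \<le> (\<Sum>S\<in>K. real (dim (span (c ` S))) + real (card (R S)))"
    proof (rule sum_mono)
      fix S assume "S \<in> K"
      have "card S \<le> dim (span (c ` S)) + card (R S)" unfolding R_def by (rule step1)
      then have "real (card S) \<le> real (dim (span (c ` S)) + card (R S))" by (simp only: of_nat_le_iff)
      then show "real (card S) \<le> real (dim (span (c ` S))) + real (card (R S))" by (simp only: of_nat_add)
    qed
    also have "\<dots> = Sr + SR" by (simp add: sum.distrib Sr_def SR_def)
    finally show ?thesis .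
  qed
  have h2: "SR * (real CARD('n) - real k) \<le> ST * real k"
  proof -
    have "(\<Sum>S\<in>K. card (R S)) * (CARD('n) - k) \<le> (\<Sum>S\<in>K. card (T S)) * k"
      using step2[of c k] by (simp add: K_def R_def T_def)
    then have "real ((\<Sum>S\<in>K. card (R S)) * (CARD('n) - k)) \<le> real ((\<Sum>S\<in>K. card (T S)) * k)"
      by linarith
    then show ?thesis using assms(2) by (simp add: SR_def ST_def of_nat_diff)
  qed
  have kpos: "real k > 0" using assms by simp
  have nk: "real CARD('n) - real k \<ge> 0" using assms by simp
  have "(real CARD('n) / real k - 1) * (real k - Sr / N)
        = (real CARD('n) - real k) * (real k * N - Sr) / (real k * N)"
    using kpos Npos by (simp add: field_simps)
  also have "\<dots> \<le> (real CARD('n) - real k) * SR / (real k * N)"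
    using kpos Npos h1 nk by (intro divide_right_mono mult_left_mono) auto
  also have "\<dots> \<le> ST * real k / (real k * N)"
    using kpos Npos h2 by (intro divide_right_mono) (auto simp: mult.commute)
  also have "\<dots> = ST / N" using kpos by simp
  finally show ?thesis using E1 E2 by simp
qed

end
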